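(* Let $\mathcal{M}$ be an unbounded graph matroid family and let $G$ be an $\mathcal{M}$-reconstructible graph with at least two edges. Then $\mathcal{M}(G)$ is bridgeless (i.e., has no coloops).
   Context: All graphs are finite and simple and have no isolated vertices. A graph matroid family $\mathcal{M}$ assigns to every graph $G$ a matroid $\mathcal{M}(G)$ on $E(G)$ such that (i) every graph isomorphism $V(G)\to V(H)$ induces an isomorphism $\mathcal{M}(G)\to\mathcal{M}(H)$, and (ii) for every subgraph $H$ of $G$, $\mathcal{M}(H)$ is the restriction of $\mathcal{M}(G)$ to $E(H)$. $\mathcal{M}$ is unbounded if the rank of $\mathcal{M}(K_n)$ is unbounded in $n$. $G$ is $\mathcal{M}$-reconstructible if for every graph $H$ and every matroid isomorphism $\psi:E(G)\to E(H)$ between $\mathcal{M}(G)$ and $\mathcal{M}(H)$ there is a graph isomorphism $\varphi:V(G)\to V(H)$ with $\psi(uv)=\varphi(u)\varphi(v)$ for all $uv\in E(G)$. A bridge of a matroid is an element contained in no circuit. *)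

theory Defs
  imports Main
begin

text \<open>Graphs: finite simple graphs without isolated vertices, on vertex type nat,
represented by their edge set (each edge a 2-element vertex set).
The vertex set is the union of the edges.\<close>

type_synonym graph = "nat set set"

definition is_graph :: "graph \<Rightarrow> bool" where
  "is_graph G \<longleftrightarrow> finite G \<and> (\<forall>e\<in>G. card e = 2)"

definition verts :: "graph \<Rightarrow> nat set" where
  "verts G = \<Union>G"

definition graph_iso :: "(nat \<Rightarrow> nat) \<Rightarrow> graph \<Rightarrow> graph \<Rightarrow> bool" where
  "graph_iso \<phi> G H \<longleftrightarrow> bij_betw \<phi> (verts G) (verts H) \<and>
     (\<forall>u\<in>verts G. \<forall>v\<in>verts G. {u, v} \<in> G \<longleftrightarrow> {\<phi> u, \<phi> v} \<in> H)"

definition matroid :: "'a set \<Rightarrow> 'a set set \<Rightarrow> bool" where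
  "matroid E Ind \<longleftrightarrow> finite E \<and> (\<forall>I\<in>Ind. I \<subseteq> E) \<and> {} \<in> Ind \<and>
     (\<forall>I J. J \<in> Ind \<longrightarrow> I \<subseteq> J \<longrightarrow> I \<in> Ind) \<and>
     (\<forall>I J. I \<in> Ind \<longrightarrow> J \<in> Ind \<longrightarrow> card I < card J \<longrightarrow> (\<exists>x\<in>J - I. insert x I \<in> Ind))"

definition matroid_iso :: "('a \<Rightarrow> 'b) \<Rightarrow> 'a set \<Rightarrow> 'a set set \<Rightarrow> 'b set \<Rightarrow> 'b set set \<Rightarrow> bool" where
  "matroid_iso \<psi> E1 Ind1 E2 Ind2 \<longleftrightarrow> bij_betw \<psi> E1 E2 \<and>
     (\<forall>I. I \<subseteq> E1 \<longrightarrow> (I \<in> Ind1 \<longleftrightarrow> \<psi> ` I \<in> Ind2))"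

definition circuit :: "'a set \<Rightarrow> 'a set set \<Rightarrow> 'a set \<Rightarrow> bool" where
  "circuit E Ind C \<longleftrightarrow> C \<subseteq> E \<and> C \<notin> Ind \<and> (\<forall>D. D \<subset> C \<longrightarrow> D \<in> Ind)"

definition bridge :: "'a set \<Rightarrow> 'a set set \<Rightarrow> 'a \<Rightarrow> bool" where
  "bridge E Ind e \<longleftrightarrow> e \<in> E \<and> \<not> (\<exists>C. circuit E Ind C \<and> e \<in> C)"

definition bridgeless :: "'a set \<Rightarrow> 'a set set \<Rightarrow> bool" where
  "bridgeless E Ind \<longleftrightarrow> (\<forall>e\<in>E. \<not> bridge E Ind e)"

definition graph_matroid_family :: "(graph \<Rightarrow> nat set set set) \<Rightarrow> bool" where
  "graph_matroid_family M \<longleftrightarrow>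
     (\<forall>G. is_graph G \<longrightarrow> matroid G (M G)) \<and>
     (\<forall>G H \<phi>. is_graph G \<longrightarrow> is_graph H \<longrightarrow> graph_iso \<phi> G H \<longrightarrow>
        matroid_iso (\<lambda>e. \<phi> ` e) G (M G) H (M H)) \<and>
     (\<forall>G H. is_graph G \<longrightarrow> H \<subseteq> G \<longrightarrow> M H = {I \<in> M G. I \<subseteq> H})"

definition complete_graph :: "nat \<Rightarrow> graph" where
  "complete_graph n = {{i, j} | i j. i < j \<and> j < n}"

definition matroid_rank :: "'a set set \<Rightarrow> nat" where
  "matroid_rank Ind = Max (card ` Ind)"

definition unbounded_family :: "(graph \<Rightarrow> nat set set set) \<Rightarrow> bool" where
  "unbounded_family M \<longleftrightarrow> (\<forall>k. \<exists>n. matroid_rank (M (complete_graph n)) \<ge> k)"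

definition reconstructible :: "(graph \<Rightarrow> nat set set set) \<Rightarrow> graph \<Rightarrow> bool" where
  "reconstructible M G \<longleftrightarrow>
     (\<forall>H \<psi>. is_graph H \<longrightarrow> matroid_iso \<psi> G (M G) H (M H) \<longrightarrow>
        (\<exists>\<phi>. graph_iso \<phi> G H \<and> (\<forall>u v. {u, v} \<in> G \<longrightarrow> \<psi> {u, v} = {\<phi> u, \<phi> v})))"

end

theory Submission
  imports Defs
begin

definition img :: "(nat \<Rightarrow> nat) \<Rightarrow> graph \<Rightarrow> graph" where
  "img \<phi> G = (\<lambda>e. \<phi> ` e) ` G"

lemma gm_matroid: "graph_matroid_family M \<Longrightarrow> is_graph G \<Longrightarrow> matroid G (M G)"
  unfolding graph_matroid_family_def using conjunct1 by fast

lemma gm_iso: "graph_matroid_family M \<Longrightarrow> is_graph G \<Longrightarrow> is_graph H \<Longrightarrow> graph_iso \<phi> G H \<Longrightarrow>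
    matroid_iso (\<lambda>e. \<phi> ` e) G (M G) H (M H)"
proof -
  assume a: "graph_matroid_family M" "is_graph G" "is_graph H" "graph_iso \<phi> G H"
  have "\<forall>G H \<phi>. is_graph G \<longrightarrow> is_graph H \<longrightarrow> graph_iso \<phi> G H \<longrightarrow>
        matroid_iso (\<lambda>e. \<phi> ` e) G (M G) H (M H)"
    using a(1) unfolding graph_matroid_family_def by (elim conjE)
  then show ?thesis using a(2-4) by blast
qed

lemma gm_restr: "graph_matroid_family M \<Longrightarrow> is_graph G \<Longrightarrow> H \<subseteq> G \<Longrightarrow> M H = {I \<in> M G. I \<subseteq> H}"
proof -
  assume a: "graph_matroid_family M" "is_graph G" "H \<subseteq> G"
  have "\<forall>G H. is_graph G \<longrightarrow> H \<subseteq> G \<longrightarrow> M H = {I \<in> M G. I \<subseteq> H}"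
    using a(1) unfolding graph_matroid_family_def by (elim conjE)
  then show ?thesis using a(2,3) by blast
qed

lemma restr_iff: "graph_matroid_family M \<Longrightarrow> is_graph G \<Longrightarrow> H \<subseteq> G \<Longrightarrow> I \<subseteq> H \<Longrightarrow> (I \<in> M H \<longleftrightarrow> I \<in> M G)"
  using gm_restr by blast

lemma m_sub: "matroid E Ind \<Longrightarrow> I \<in> Ind \<Longrightarrow> I \<subseteq> E"
  unfolding matroid_def by blast

lemma m_down: "matroid E Ind \<Longrightarrow> J \<in> Ind \<Longrightarrow> I \<subseteq> J \<Longrightarrow> I \<in> Ind"
  unfolding matroid_def by blast

lemma m_aug: "matroid E Ind \<Longrightarrow> I \<in> Ind \<Longrightarrow> J \<in> Ind \<Longrightarrow> card I < card J \<Longrightarrow> \<exists>x\<in>J - I. insert x I \<in> Ind"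
  unfolding matroid_def by blast

lemma m_fin: "matroid E Ind \<Longrightarrow> finite E"
  unfolding matroid_def by blast

lemma is_graph_subset: "is_graph G \<Longrightarrow> H \<subseteq> G \<Longrightarrow> is_graph H"
  unfolding is_graph_def by (meson finite_subset subsetD)

lemma is_graph_Un: "is_graph G \<Longrightarrow> is_graph H \<Longrightarrow> is_graph (G \<union> H)"
  unfolding is_graph_def by auto

lemma is_graph_insert: "is_graph G \<Longrightarrow> card f = 2 \<Longrightarrow> is_graph (insert f G)"
  unfolding is_graph_def by auto

lemma inj_edge: "inj \<phi> \<Longrightarrow> inj (\<lambda>e. \<phi> ` e)"
  unfolding inj_on_def using inj_image_eq_iff by blast

lemma img_graph_iso: assumes "inj \<phi>" shows "graph_iso \<phi> G (img \<phi> G)"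
proof -
  have v: "verts (img \<phi> G) = \<phi> ` verts G" unfolding verts_def img_def by (simp add: image_Union)
  have inj: "inj_on \<phi> (verts G)" using assms unfolding inj_on_def by blast
  have b: "bij_betw \<phi> (verts G) (verts (img \<phi> G))"
    unfolding v by (rule bij_betw_imageI[OF inj refl])
  have "{u, v} \<in> G \<longleftrightarrow> {\<phi> u, \<phi> v} \<in> img \<phi> G" for u v
  proof
    assume "{u, v} \<in> G"
    then have "\<phi> ` {u, v} \<in> img \<phi> G" unfolding img_def by (rule imageI)
    then show "{\<phi> u, \<phi> v} \<in> img \<phi> G" by simp
  next
    assume "{\<phi> u, \<phi> v} \<in> img \<phi> G"
    then obtain e where e: "e \<in> G" "{\<phi> u, \<phi> v} = \<phi> ` e" unfolding img_def by (rule imageE)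
    have "\<phi> ` e = \<phi> ` {u, v}" using e(2) by (simp only: image_insert image_empty)
    then have "e = {u, v}" using iffD1[OF inj_image_eq_iff[OF assms]] by blast
    then show "{u, v} \<in> G" using e(1) by simp
  qed
  then show ?thesis using b unfolding graph_iso_def by blast
qed

lemma img_is_graph: assumes "inj \<phi>" "is_graph G" shows "is_graph (img \<phi> G)"
proof -
  have "finite (img \<phi> G)" using assms(2) unfolding is_graph_def img_def by (elim conjE) (rule finite_imageI)
  moreover have "\<forall>e\<in>img \<phi> G. card e = 2"
  proof
    fix e assume "e \<in> img \<phi> G"
    then obtain h where h: "h \<in> G" "e = \<phi> ` h" unfolding img_def by (rule imageE)
    have "card (\<phi> ` h) = card h" by (rule card_image[OF inj_on_subset[OF assms(1) subset_UNIV]])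
    moreover have "card h = 2" using assms(2) h(1) unfolding is_graph_def by blast
    ultimately show "card e = 2" using h(2) by simp
  qed
  ultimately show ?thesis unfolding is_graph_def by (rule conjI)
qed

lemma img_card: "inj \<phi> \<Longrightarrow> card (img \<phi> G) = card G"
  unfolding img_def by (rule card_image[OF inj_on_subset[OF inj_edge subset_UNIV]])

lemma img_indep:
  assumes "graph_matroid_family M" "inj \<phi>" "is_graph G" "G \<in> M G"
  shows "img \<phi> G \<in> M (img \<phi> G)"
proof -
  have "matroid_iso (\<lambda>e. \<phi> ` e) G (M G) (img \<phi> G) (M (img \<phi> G))"
    by (rule gm_iso[OF assms(1,3) img_is_graph[OF assms(2,3)] img_graph_iso[OF assms(2)]])
  then have "\<forall>I. I \<subseteq> G \<longrightarrow> (I \<in> M G \<longleftrightarrow> (\<lambda>e. \<phi> ` e) ` I \<in> M (img \<phi> G))"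
    unfolding matroid_iso_def by (elim conjE)
  then have "G \<in> M G \<longleftrightarrow> (\<lambda>e. \<phi> ` e) ` G \<in> M (img \<phi> G)" by blast
  then show ?thesis using assms(4) unfolding img_def by blast
qed

lemma coloop:
  assumes mat: "matroid G (M G)" and br: "bridge G (M G) e"
    and J: "J \<subseteq> G - {e}" "J \<in> M G"
  shows "insert e J \<in> M G"
proof (rule ccontr)
  assume nd: "insert e J \<notin> M G"
  define P where "P = (\<lambda>C. C \<subseteq> insert e J \<and> C \<notin> M G)"
  have "P (insert e J)" unfolding P_def using nd by simp
  then obtain C where C: "P C" and Cmin: "\<And>D. P D \<Longrightarrow> card C \<le> card D"
    using ex_has_least_nat[of P "insert e J" card] by blast
  have CJ: "C \<subseteq> insert e J" and CM: "C \<notin> M G" using C unfolding P_def by simp_all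
  have eG: "e \<in> G" using br unfolding bridge_def by simp
  have finG: "finite G" using mat by (rule m_fin)
  have JG: "J \<subseteq> G" using J(1) by blast
  have eJG: "insert e J \<subseteq> G" using eG JG by simp
  have finC: "finite C" using finite_subset[OF subset_trans[OF CJ eJG] finG] .
  have sub: "\<forall>D. D \<subset> C \<longrightarrow> D \<in> M G"
  proof (intro allI impI)
    fix D assume DC: "D \<subset> C"
    have lt: "card D < card C" using psubset_card_mono[OF finC DC] .
    show "D \<in> M G"
    proof (rule ccontr)
      assume "D \<notin> M G"
      moreover have "D \<subseteq> insert e J" using DC CJ by blast
      ultimately have "P D" unfolding P_def by simp
      then have "card C \<le> card D" by (rule Cmin)
      then show False using lt by simp
    qed
  qed
  have CG: "C \<subseteq> G" using CJ eJG by (rule subset_trans)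
  have eC: "e \<in> C"
  proof (rule ccontr)
    assume "e \<notin> C" then have "C \<subseteq> J" using CJ by blast
    then have "C \<in> M G" by (rule m_down[OF mat J(2)])
    then show False using CM by simp
  qed
  have "circuit G (M G) C" unfolding circuit_def using CG CM sub by simp
  then show False using br eC unfolding bridge_def by blast
qed

lemma free_lemma:
  assumes gm: "graph_matroid_family M" and H: "is_graph H" "H = insert f G'" "f \<notin> G'"
    and B: "B \<in> M G'" "\<forall>I\<in>M G'. card I \<le> card B"
    and fB: "insert f B \<in> M H"
    and J: "J \<subseteq> G'" "J \<in> M H"
  shows "insert f J \<in> M H"
proof -
  have mat: "matroid H (M H)" using gm H(1) by (rule gm_matroid)
  have GH: "G' \<subseteq> H" using H(2) by blast
  have finH: "finite H" using mat by (rule m_fin)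
  have finG': "finite G'" using finite_subset[OF GH finH] .
  have iff: "\<And>I. I \<subseteq> G' \<Longrightarrow> I \<in> M G' \<longleftrightarrow> I \<in> M H" using restr_iff[OF gm H(1) GH] by blast
  have gG': "is_graph G'" using is_graph_subset[OF H(1) GH] .
  have matG': "matroid G' (M G')" using gm gG' by (rule gm_matroid)
  have BG': "B \<subseteq> G'" using m_sub[OF matG' B(1)] .
  have finB: "finite B" using finite_subset[OF BG' finG'] .
  have fnB: "f \<notin> B" using BG' H(3) by blast
  define P where "P = (\<lambda>I. I \<in> M H \<and> J \<subseteq> I \<and> I \<subseteq> G')"
  have PJ: "P J" unfolding P_def using J by simp
  have bnd: "\<forall>y. P y \<longrightarrow> card y < Suc (card G')"
  proof (intro allI impI)
    fix y assume "P y"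
    then have "y \<subseteq> G'" unfolding P_def by simp
    then have "card y \<le> card G'" using card_mono[OF finG'] by blast
    then show "card y < Suc (card G')" by simp
  qed
  obtain B2 where B2P: "P B2" and B2max: "\<forall>I. P I \<longrightarrow> card I \<le> card B2"
    using ex_has_greatest_nat[of P J card "Suc (card G')", OF PJ bnd] by blast
  have B2: "B2 \<in> M H" "J \<subseteq> B2" "B2 \<subseteq> G'" using B2P unfolding P_def by simp_all
  have "B2 \<in> M G'" using iff[OF B2(3)] B2(1) by simp
  then have cB2: "card B2 \<le> card B" using B(2) by blast
  have "card (insert f B) = Suc (card B)" using finB fnB by simp
  then have lt: "card B2 < card (insert f B)" using cB2 by simp
  obtain y where y: "y \<in> insert f B - B2" "insert y B2 \<in> M H"
    using m_aug[OF mat B2(1) fB lt] by blast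
  show ?thesis
  proof (cases "y = f")
    case True
    have "insert f J \<subseteq> insert y B2" using True B2(2) by blast
    then show ?thesis using m_down[OF mat y(2)] by blast
  next
    case False
    then have yG: "y \<in> G'" and yB2: "y \<notin> B2" using y BG' by blast+
    have "P (insert y B2)" unfolding P_def using y(2) B2 yG by blast
    then have "card (insert y B2) \<le> card B2" using B2max by blast
    moreover have "finite B2" using finite_subset[OF B2(3) finG'] .
    ultimately show ?thesis using yB2 by simp
  qed
qed

lemma complete_graph_is_graph: "is_graph (complete_graph n)"
proof -
  have "complete_graph n \<subseteq> Pow {..<n}" unfolding complete_graph_def by auto
  then have "finite (complete_graph n)" by (meson finite_Pow_iff finite_lessThan finite_subset)
  moreover have "\<forall>e\<in>complete_graph n. card e = 2" unfolding complete_graph_def by auto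
  ultimately show ?thesis unfolding is_graph_def by blast
qed

lemma big_indep:
  assumes gm: "graph_matroid_family M" and unb: "unbounded_family M"
  shows "\<exists>I. is_graph I \<and> I \<in> M I \<and> card I \<ge> k"
proof -
  obtain n where r: "matroid_rank (M (complete_graph n)) \<ge> k" using unb unfolding unbounded_family_def by blast
  define K where "K = complete_graph n"
  have gK: "is_graph K" unfolding K_def by (rule complete_graph_is_graph)
  have mat: "matroid K (M K)" using gm gK gm_matroid by blast
  have "M K \<subseteq> Pow K" using m_sub[OF mat] by blast
  moreover have "finite K" using gK unfolding is_graph_def by blast
  ultimately have fin: "finite (M K)" by (meson finite_Pow_iff finite_subset)
  have ne: "{} \<in> M K" using mat unfolding matroid_def by blast
  have "Max (card ` M K) \<in> card ` M K" using fin ne by (intro Max_in) auto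
  then obtain I where I: "I \<in> M K" "card I = matroid_rank (M K)" unfolding matroid_rank_def by auto
  have IK: "I \<subseteq> K" using m_sub[OF mat I(1)] .
  have "is_graph I" using is_graph_subset[OF gK IK] .
  moreover have "I \<in> M I" using restr_iff[OF gm gK IK] I(1) by blast
  ultimately show ?thesis using I r K_def by auto
qed

lemma get_f:
  assumes gm: "graph_matroid_family M" and unb: "unbounded_family M"
    and G': "is_graph G'" and V: "finite V" "verts G' \<subseteq> V" and B: "B \<in> M G'"
  shows "\<exists>f0. card f0 = 2 \<and> f0 \<inter> V = {} \<and> f0 \<notin> G' \<and> insert f0 B \<in> M (insert f0 G')"
proof -
  obtain I0 where I0: "is_graph I0" "I0 \<in> M I0" "card I0 \<ge> Suc (card B)"
    using big_indep[OF gm unb] by blast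
  obtain m where m: "\<forall>v\<in>V. v < m" using V(1) finite_nat_set_iff_bounded by blast
  define \<tau> where "\<tau> = (\<lambda>i::nat. i + m)"
  have injt: "inj \<tau>" unfolding \<tau>_def by (simp add: inj_on_def)
  define I1 where "I1 = img \<tau> I0"
  have gI1: "is_graph I1" unfolding I1_def using img_is_graph[OF injt I0(1)] .
  have I1i: "I1 \<in> M I1" unfolding I1_def using img_indep[OF gm injt I0(1,2)] .
  have cI1: "card I1 = card I0" unfolding I1_def using img_card[OF injt] .
  have disj: "\<forall>f\<in>I1. f \<inter> V = {}" unfolding I1_def img_def \<tau>_def using m by fastforce
  define U where "U = G' \<union> I1"
  have gU: "is_graph U" unfolding U_def using is_graph_Un[OF G' gI1] .
  have matU: "matroid U (M U)" using gm gU gm_matroid by blast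
  have matG': "matroid G' (M G')" using gm G' gm_matroid by blast
  have BG': "B \<subseteq> G'" using m_sub[OF matG' B] .
  have BU: "B \<in> M U" using restr_iff[OF gm gU _ BG'] B unfolding U_def by blast
  have I1U: "I1 \<in> M U" using restr_iff[OF gm gU _ order_refl] I1i unfolding U_def by blast
  have "card B < card I1" using cI1 I0(3) by simp
  then obtain f0 where f0: "f0 \<in> I1 - B" "insert f0 B \<in> M U" using m_aug[OF matU BU I1U] by blast
  have c2: "card f0 = 2" using gI1 f0 unfolding is_graph_def by blast
  have d: "f0 \<inter> V = {}" using disj f0 by blast
  have "f0 \<notin> G'"
  proof
    assume "f0 \<in> G'"
    then have "f0 \<subseteq> V" using V(2) unfolding verts_def by blast
    then have "f0 = {}" using d by blast
    then show False using c2 by simp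
  qed
  moreover have "insert f0 B \<in> M (insert f0 G')"
    using restr_iff[OF gm gU, of "insert f0 G'" "insert f0 B"] f0 BG' unfolding U_def by blast
  ultimately show ?thesis using c2 d by blast
qed

lemma verts_finite: "is_graph G \<Longrightarrow> finite (verts G)"
  unfolding is_graph_def verts_def by (metis card.infinite finite_Union zero_neq_numeral)

lemma get_f_B:
  assumes gm: "graph_matroid_family M" and unb: "unbounded_family M"
    and G': "is_graph G'" and B: "B \<in> M G'" "\<forall>I\<in>M G'. card I \<le> card B"
    and x: "x \<in> verts G'"
  shows "\<exists>f. card f = 2 \<and> f \<notin> G' \<and> f \<inter> verts G' \<noteq> {} \<and> insert f B \<in> M (insert f G')"
proof -
  define V where "V = verts G'"
  obtain f0 where f0: "card f0 = 2" "f0 \<inter> V = {}" "f0 \<notin> G'" "insert f0 B \<in> M (insert f0 G')"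
    using get_f[OF gm unb G' verts_finite[OF G'] order_refl B(1)] unfolding V_def by blast
  obtain b c where bc: "f0 = {b, c}" "b \<noteq> c" using f0(1) card_2_iff by metis
  have bV: "b \<notin> V" "c \<notin> V" using f0(2) bc by auto
  have xV: "x \<in> V" using x V_def by simp
  define \<sigma> where "\<sigma> = (\<lambda>i. if i = x then b else if i = b then x else i)"
  have injs: "inj \<sigma>" unfolding \<sigma>_def inj_on_def using bV xV by auto
  have matG': "matroid G' (M G')" using gm G' gm_matroid by blast
  have BG': "B \<subseteq> G'" using m_sub[OF matG' B(1)] .
  define Hg where "Hg = insert f0 G'"
  have gHg: "is_graph Hg" unfolding Hg_def using is_graph_insert[OF G' f0(1)] .
  define K where "K = insert f0 B"
  have KH: "K \<subseteq> Hg" unfolding K_def Hg_def using BG' by blast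
  have gK: "is_graph K" using is_graph_subset[OF gHg KH] .
  have KK: "K \<in> M K" using restr_iff[OF gm gHg KH order_refl] f0(4) unfolding K_def Hg_def by blast
  define SK where "SK = img \<sigma> K"
  have gSK: "is_graph SK" unfolding SK_def using img_is_graph[OF injs gK] .
  have SKi: "SK \<in> M SK" unfolding SK_def using img_indep[OF gm injs gK KK] .
  have finB: "finite B" using BG' G' unfolding is_graph_def using finite_subset by blast
  have "f0 \<notin> B" using BG' f0(3) by blast
  then have cSK: "card SK = Suc (card B)" unfolding SK_def img_card[OF injs] K_def using finB by simp
  define U where "U = G' \<union> SK"
  have gU: "is_graph U" unfolding U_def using is_graph_Un[OF G' gSK] .
  have matU: "matroid U (M U)" using gm gU gm_matroid by blast
  have BU: "B \<in> M U" using restr_iff[OF gm gU _ BG'] B(1) unfolding U_def by blast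
  have SKU: "SK \<in> M U" using restr_iff[OF gm gU _ order_refl] SKi unfolding U_def by blast
  have "card B < card SK" using cSK by simp
  then obtain y where y: "y \<in> SK - B" "insert y B \<in> M U" using m_aug[OF matU BU SKU] by blast
  have yG: "y \<notin> G'"
  proof
    assume "y \<in> G'"
    then have "insert y B \<in> M G'" using restr_iff[OF gm gU, of G' "insert y B"] y BG' unfolding U_def by blast
    then have "card (insert y B) \<le> card B" using B(2) by blast
    then show False using y finB by simp
  qed
  have yV: "y \<inter> V \<noteq> {}"
  proof -
    obtain h where h: "h \<in> K" "y = \<sigma> ` h" using y unfolding SK_def img_def by blast
    show ?thesis
    proof (cases "h = f0")
      case True
      then have "x \<in> y" using h bc unfolding \<sigma>_def by auto
      then show ?thesis using xV by blast
    next
      case False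
      then have hB: "h \<in> B" using h K_def by blast
      then have "card h = 2" using G' BG' unfolding is_graph_def by blast
      then obtain p q where pq: "h = {p, q}" "p \<noteq> q" using card_2_iff by metis
      have "h \<subseteq> V" using hB BG' unfolding V_def verts_def by blast
      then have pqV: "p \<in> V" "q \<in> V" using pq by auto
      obtain r where r: "r \<in> h" "r \<noteq> x" using pq by blast
      have "r \<in> V" using r pq pqV by blast
      then have "\<sigma> r = r" unfolding \<sigma>_def using r bV by auto
      then have "r \<in> y" using h r by force
      then show ?thesis using \<open>r \<in> V\<close> by blast
    qed
  qed
  have c2: "card y = 2" using gSK y unfolding is_graph_def by blast
  have "insert y B \<in> M (insert y G')"
    using restr_iff[OF gm gU, of "insert y G'" "insert y B"] y BG' unfolding U_def by blast
  then show ?thesis using c2 yG yV V_def by blast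
qed

lemma recon_step:
  assumes gm: "graph_matroid_family M" and gG: "is_graph G" and rec: "reconstructible M G"
    and eG: "e \<in> G" and br: "bridge G (M G) e"
    and B: "B \<in> M (G - {e})" "\<forall>I\<in>M (G - {e}). card I \<le> card B"
    and f: "card f = 2" "f \<notin> G" "insert f B \<in> M (insert f (G - {e}))"
  shows "\<exists>\<phi>. inj_on \<phi> (verts G) \<and> (\<forall>g\<in>G - {e}. \<phi> ` g = g) \<and> \<phi> ` e = f"
proof -
  define G' where "G' = G - {e}"
  define H where "H = insert f G'"
  have G'G: "G' \<subseteq> G" unfolding G'_def by blast
  have gG': "is_graph G'" using is_graph_subset[OF gG G'G] .
  have gH: "is_graph H" unfolding H_def using is_graph_insert[OF gG' f(1)] .
  have matG: "matroid G (M G)" using gm gG by (rule gm_matroid)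
  have matH: "matroid H (M H)" using gm gH by (rule gm_matroid)
  have G'H: "G' \<subseteq> H" unfolding H_def by blast
  have fG': "f \<notin> G'" using f(2) G'G by blast
  define \<psi> where "\<psi> = (\<lambda>x. if x = e then f else x)"
  have iffG: "\<And>I. I \<subseteq> G' \<Longrightarrow> I \<in> M G' \<longleftrightarrow> I \<in> M G" using restr_iff[OF gm gG G'G] by blast
  have iffH: "\<And>I. I \<subseteq> G' \<Longrightarrow> I \<in> M G' \<longleftrightarrow> I \<in> M H" using restr_iff[OF gm gH G'H] by blast
  have B1: "B \<in> M G'" using B(1) unfolding G'_def .
  have B2: "\<forall>I\<in>M G'. card I \<le> card B" using B(2) unfolding G'_def .
  have fB: "insert f B \<in> M H" using f(3) unfolding H_def G'_def .
  have free: "\<And>J. J \<subseteq> G' \<Longrightarrow> J \<in> M H \<Longrightarrow> insert f J \<in> M H"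
    by (rule free_lemma[OF gm gH H_def fG' B1 B2 fB])
  have col: "\<And>J. J \<subseteq> G' \<Longrightarrow> J \<in> M G \<Longrightarrow> insert e J \<in> M G"
  proof -
    fix J assume "J \<subseteq> G'" "J \<in> M G"
    then show "insert e J \<in> M G" using coloop[where G=G and M=M and e=e and J=J, OF matG br] unfolding G'_def by blast
  qed
  have injpsi: "inj_on \<psi> G"
  proof (rule inj_onI)
    fix x y assume xy: "x \<in> G" "y \<in> G" "\<psi> x = \<psi> y"
    show "x = y"
    proof (cases "x = e")
      case True
      then show ?thesis using xy f(2) unfolding \<psi>_def by (cases "y = e") simp_all
    next
      case False
      then show ?thesis using xy f(2) unfolding \<psi>_def by (cases "y = e") simp_all
    qed
  qed
  have imgpsi: "\<psi> ` G = H"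
  proof
    show "\<psi> ` G \<subseteq> H" unfolding H_def G'_def \<psi>_def by auto
    show "H \<subseteq> \<psi> ` G"
    proof
      fix x assume "x \<in> H"
      then consider "x = f" | "x \<in> G'" unfolding H_def by blast
      then show "x \<in> \<psi> ` G"
      proof cases
        case 1
        have "\<psi> e = f" unfolding \<psi>_def by simp
        then show ?thesis using 1 eG by (metis imageI)
      next
        case 2
        then have "x \<noteq> e" "x \<in> G" unfolding G'_def by simp_all
        then have "\<psi> x = x" unfolding \<psi>_def by simp
        then show ?thesis using \<open>x \<in> G\<close> by (metis imageI)
      qed
    qed
  qed
  have bij: "bij_betw \<psi> G H" using injpsi imgpsi by (rule bij_betw_imageI)
  have ind: "\<forall>I. I \<subseteq> G \<longrightarrow> (I \<in> M G \<longleftrightarrow> \<psi> ` I \<in> M H)"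
  proof (intro allI impI)
    fix I assume IG: "I \<subseteq> G"
    show "I \<in> M G \<longleftrightarrow> \<psi> ` I \<in> M H"
    proof (cases "e \<in> I")
      case False
      have "\<psi> ` I = (\<lambda>x. x) ` I" by (rule image_cong[OF refl]) (use False in \<open>simp add: \<psi>_def\<close>, blast)
      then have "\<psi> ` I = I" by simp
      moreover have IG': "I \<subseteq> G'" using IG False unfolding G'_def by blast
      ultimately show ?thesis using iffG[OF IG'] iffH[OF IG'] by simp
    next
      case True
      define J where "J = I - {e}"
      have IJ: "I = insert e J" using True unfolding J_def by blast
      have JG': "J \<subseteq> G'" using IG unfolding J_def G'_def by blast
      have eJ: "e \<notin> J" unfolding J_def by simp
      have "\<psi> ` J = (\<lambda>x. x) ` J" by (rule image_cong[OF refl]) (use eJ in \<open>simp add: \<psi>_def\<close>, blast)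
      then have pJ: "\<psi> ` J = J" by simp
      have pe: "\<psi> e = f" unfolding \<psi>_def by simp
      have pI: "\<psi> ` I = insert f J" by (simp only: IJ image_insert pe pJ)
      have "I \<in> M G \<longleftrightarrow> J \<in> M G"
      proof
        assume "I \<in> M G" then show "J \<in> M G" using m_down[OF matG] IJ by blast
      next
        assume "J \<in> M G" then show "I \<in> M G" using col[OF JG'] IJ by simp
      qed
      moreover have "insert f J \<in> M H \<longleftrightarrow> J \<in> M H"
      proof
        assume "insert f J \<in> M H" then show "J \<in> M H" using m_down[OF matH] by blast
      next
        assume "J \<in> M H" then show "insert f J \<in> M H" using free[OF JG'] by simp
      qed
      ultimately show ?thesis using iffG[OF JG'] iffH[OF JG'] pI by simp
    qed
  qed
  have miso: "matroid_iso \<psi> G (M G) H (M H)" unfolding matroid_iso_def using bij ind by (rule conjI)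
  have R: "\<forall>H \<psi>. is_graph H \<longrightarrow> matroid_iso \<psi> G (M G) H (M H) \<longrightarrow>
        (\<exists>\<phi>. graph_iso \<phi> G H \<and> (\<forall>u v. {u, v} \<in> G \<longrightarrow> \<psi> {u, v} = {\<phi> u, \<phi> v}))"
    using rec unfolding reconstructible_def .
  have "\<exists>\<phi>. graph_iso \<phi> G H \<and> (\<forall>u v. {u, v} \<in> G \<longrightarrow> \<psi> {u, v} = {\<phi> u, \<phi> v})"
    by (rule R[rule_format, OF gH miso])
  then obtain \<phi> where phi: "graph_iso \<phi> G H" "\<forall>u v. {u, v} \<in> G \<longrightarrow> \<psi> {u, v} = {\<phi> u, \<phi> v}"
    by blast
  have bj: "bij_betw \<phi> (verts G) (verts H)" using phi(1) unfolding graph_iso_def by (elim conjE)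
  have inj: "inj_on \<phi> (verts G)" using bj by (rule bij_betw_imp_inj_on)
  have img: "\<phi> ` g = \<psi> g" if "g \<in> G" for g
  proof -
    have c2: "card g = 2" using gG that unfolding is_graph_def by blast
    obtain p q where pq: "g = {p, q}" using iffD1[OF card_2_iff c2] by blast
    have "{p, q} \<in> G" using that pq by simp
    then have "\<psi> {p, q} = {\<phi> p, \<phi> q}" by (rule phi(2)[rule_format])
    then show ?thesis using pq by simp
  qed
  have "\<forall>g\<in>G'. \<phi> ` g = g"
  proof
    fix g assume "g \<in> G'"
    then have "g \<in> G" "g \<noteq> e" unfolding G'_def by simp_all
    then show "\<phi> ` g = g" using img unfolding \<psi>_def by simp
  qed
  moreover have "\<phi> ` e = f" using img[OF eG] unfolding \<psi>_def by simp
  ultimately show ?thesis using inj unfolding G'_def by blast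
qed

theorem lemma3p1:
  assumes "graph_matroid_family M"
    and "unbounded_family M"
    and "is_graph G"
    and "reconstructible M G"
    and "card G \<ge> 2"
  shows "bridgeless G (M G)"
proof (rule ccontr)
  note gm = assms(1) and unb = assms(2) and gG = assms(3) and rec = assms(4)
  assume "\<not> bridgeless G (M G)"
  then obtain e where eG: "e \<in> G" and br: "bridge G (M G) e" unfolding bridgeless_def by blast
  define G' where "G' = G - {e}"
  have G'G: "G' \<subseteq> G" unfolding G'_def by blast
  have gG': "is_graph G'" using is_graph_subset[OF gG G'G] .
  have finG: "finite G" using gG is_graph_def by blast
  have matG': "matroid G' (M G')" using gm gG' gm_matroid by blast
  obtain B where B: "B \<in> M G'" "\<forall>I. I \<in> M G' \<longrightarrow> card I \<le> card B"
  proof -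
    have "{} \<in> M G'" using matG' unfolding matroid_def by blast
    moreover have "\<forall>I. I \<in> M G' \<longrightarrow> card I < Suc (card G')"
      using m_sub[OF matG'] finG G'G by (meson card_mono finite_subset le_imp_less_Suc)
    ultimately show ?thesis using that ex_has_greatest_nat[of "\<lambda>I. I \<in> M G'" "{}" card "Suc (card G')"] by blast
  qed
  have B': "\<forall>I\<in>M G'. card I \<le> card B" using B by blast
  have "card G' \<ge> 1" using assms(5) eG finG unfolding G'_def by simp
  then have "G' \<noteq> {}" by auto
  show False
  proof (cases "e \<inter> verts G' = {}")
    case False
    obtain f where f: "card f = 2" "f \<inter> verts G = {}" "f \<notin> G'" "insert f B \<in> M (insert f G')"
      using get_f[OF gm unb gG' verts_finite[OF gG]] B(1) G'G unfolding verts_def by blast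
    have "f \<notin> G"
    proof
      assume "f \<in> G"
      then have "f \<subseteq> verts G" unfolding verts_def by blast
      then have "f = {}" using f(2) by blast
      then show False using f(1) by simp
    qed
    then obtain \<phi> where phi: "(\<forall>g\<in>G'. \<phi> ` g = g)" "\<phi> ` e = f"
      using recon_step[OF gm gG rec eG br B(1)[unfolded G'_def] B'[unfolded G'_def] f(1) _ f(4)[unfolded G'_def]]
      unfolding G'_def by blast
    obtain w g where wg: "w \<in> e" "w \<in> g" "g \<in> G'" using False unfolding verts_def by blast
    have "\<phi> w \<in> g" using phi(1) wg by blast
    then have "\<phi> w \<in> verts G" using wg G'G unfolding verts_def by blast
    moreover have "\<phi> w \<in> f" using phi(2) wg by blast
    ultimately show False using f(2) by blast
  next
    case True
    obtain x where x: "x \<in> verts G'" using \<open>G' \<noteq> {}\<close> gG' unfolding verts_def is_graph_def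
      by (metis Union_iff card.empty ex_in_conv zero_neq_numeral)
    obtain f where f: "card f = 2" "f \<notin> G'" "f \<inter> verts G' \<noteq> {}" "insert f B \<in> M (insert f G')"
      using get_f_B[OF gm unb gG' B(1) B' x] by blast
    have "f \<noteq> e" using True f(3) by blast
    then have "f \<notin> G" using f(2) G'_def by blast
    then obtain \<phi> where phi: "inj_on \<phi> (verts G)" "(\<forall>g\<in>G'. \<phi> ` g = g)" "\<phi> ` e = f"
      using recon_step[OF gm gG rec eG br B(1)[unfolded G'_def] B'[unfolded G'_def] f(1) _ f(4)[unfolded G'_def]]
      unfolding G'_def by blast
    obtain z g where zg: "z \<in> f" "z \<in> g" "g \<in> G'" using f(3) unfolding verts_def by blast
    obtain w where w: "w \<in> e" "\<phi> w = z" using zg phi(3) by blast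
    obtain w' where w': "w' \<in> g" "\<phi> w' = z" using zg phi(2) by (metis imageE)
    have "w \<in> verts G" "w' \<in> verts G" using w w' eG zg G'G unfolding verts_def by blast+
    then have "w = w'" using phi(1) w w' by (metis inj_onD)
    then show False using True w w' zg unfolding verts_def by blast
  qed
qed

end
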